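(* Consider dynamic bin packing with migration delays with delay cost $C$. For any $C\ge1$, there is a family of instances with minimum item duration $1$ and maximum item duration $\mu=\sqrt{C}$ on which every randomized online algorithm is at least $\frac{\sqrt{C}}{30}$-competitive (i.e., for every randomized online algorithm there is an instance in the family on which its expected cost is at least $\frac{\sqrt{C}}{30}$ times the optimum).
   Context: Dynamic bin packing with migration delays: bins have capacity $1$; items arrive online at times $a_i\ge0$ with size $s_i\in[0,1]$ and duration $d_i>0$; only the size is revealed at arrival. Each item is placed on arrival into an open bin with enough remaining capacity or a new bin; the algorithm may migrate items to other bins, and each migration of an item increases its duration by $C$. A bin is open while nonempty; the cost is $\int_0^\infty(\text{number of open bins at } t)\,dt$. The optimum is $\mathrm{OPT}(I)=\int_0^\infty\mathrm{OPT}_t\,dt$, where $\mathrm{OPT}_t$ is the minimum number of unit bins needed to pack the items present at time $t$ in the original instance (arbitrary repacking with no delay). *)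

theory Defs
  imports "HOL-Probability.Probability"
begin

text \<open>An instance is a finite
list of items, listed in order of non-decreasing arrival time (ties are arrived
simultaneously; the list index is the identity of the item).\<close>

type_synonym item = "real \<times> real \<times> real"
type_synonym bp_instance = "item list"

definition arr :: "bp_instance \<Rightarrow> nat \<Rightarrow> real" where
  "arr I i = fst (I ! i)"
definition sz :: "bp_instance \<Rightarrow> nat \<Rightarrow> real" where
  "sz I i = fst (snd (I ! i))"
definition dur :: "bp_instance \<Rightarrow> nat \<Rightarrow> real" where
  "dur I i = snd (snd (I ! i))"

definition valid_instance :: "bp_instance \<Rightarrow> bool" where
  "valid_instance I \<longleftrightarrow>
     sorted (map fst I) \<and>
     (\<forall>i<length I. 0 \<le> arr I i \<and> 0 \<le> sz I i \<and> sz I i \<le> 1 \<and> 0 < dur I i)"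

text \<open>A schedule assigns to every item (by index) the bin it is put into on arrival
and the list of its migrations, each given as (time of migration, target bin).
Bins are identified by natural numbers; a bin is open while it is nonempty, so
using an index of a currently empty bin means opening a new bin.\<close>

type_synonym schedule = "nat \<Rightarrow> nat \<times> (real \<times> nat) list"

definition depart :: "real \<Rightarrow> bp_instance \<Rightarrow> schedule \<Rightarrow> nat \<Rightarrow> real" where
  "depart C I \<sigma> i = arr I i + dur I i + C * real (length (snd (\<sigma> i)))"

definition present :: "real \<Rightarrow> bp_instance \<Rightarrow> schedule \<Rightarrow> nat \<Rightarrow> real \<Rightarrow> bool" where
  "present C I \<sigma> i t \<longleftrightarrow> i < length I \<and> arr I i \<le> t \<and> t < depart C I \<sigma> i"

definition bin_at :: "schedule \<Rightarrow> nat \<Rightarrow> real \<Rightarrow> nat" where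
  "bin_at \<sigma> i t = foldl (\<lambda>b (\<tau>, b'). if \<tau> \<le> t then b' else b) (fst (\<sigma> i)) (snd (\<sigma> i))"

text \<open>Validity of a schedule: migrations happen in chronological order, while the
item is present (the (j+1)-th migration happens before the departure time
resulting from the first j migrations), and no bin is ever over capacity.\<close>

definition valid_schedule :: "real \<Rightarrow> bp_instance \<Rightarrow> schedule \<Rightarrow> bool" where
  "valid_schedule C I \<sigma> \<longleftrightarrow>
     (\<forall>i<length I.
        sorted (map fst (snd (\<sigma> i))) \<and>
        (\<forall>j<length (snd (\<sigma> i)).
           arr I i \<le> fst (snd (\<sigma> i) ! j) \<and>
           fst (snd (\<sigma> i) ! j) < arr I i + dur I i + C * real j)) \<and>
     (\<forall>t b. (\<Sum>i\<in>{i. present C I \<sigma> i t \<and> bin_at \<sigma> i t = b}. sz I i) \<le> 1)"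

definition open_bins :: "real \<Rightarrow> bp_instance \<Rightarrow> schedule \<Rightarrow> real \<Rightarrow> nat" where
  "open_bins C I \<sigma> t = card {b. \<exists>i. present C I \<sigma> i t \<and> bin_at \<sigma> i t = b}"

definition sched_cost :: "real \<Rightarrow> bp_instance \<Rightarrow> schedule \<Rightarrow> ennreal" where
  "sched_cost C I \<sigma> = (\<integral>\<^sup>+ t. ennreal (real (open_bins C I \<sigma> t)) \<partial>lborel)"

text \<open>Offline optimum: at every time the minimum number of unit bins needed to
pack the items present at that time in the original bp_instance (no delays).\<close>

definition min_bins :: "bp_instance \<Rightarrow> nat set \<Rightarrow> nat" where
  "min_bins I S = (LEAST k. \<exists>f :: nat \<Rightarrow> nat. (\<forall>i\<in>S. f i < k) \<and>
                      (\<forall>b. (\<Sum>i\<in>{i\<in>S. f i = b}. sz I i) \<le> 1))"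

definition OPT_t :: "bp_instance \<Rightarrow> real \<Rightarrow> nat" where
  "OPT_t I t = min_bins I {i. i < length I \<and> arr I i \<le> t \<and> t < arr I i + dur I i}"

definition OPT :: "bp_instance \<Rightarrow> ennreal" where
  "OPT I = (\<integral>\<^sup>+ t. ennreal (real (OPT_t I t)) \<partial>lborel)"

text \<open>Online information: what has been revealed by time t (arrived items with
their arrival times and sizes, and for each, whether and when it has departed).
Durations are never revealed directly.\<close>

definition observed :: "real \<Rightarrow> bp_instance \<Rightarrow> schedule \<Rightarrow> real
                          \<Rightarrow> (real \<times> real \<times> real option) list" where
  "observed C I \<sigma> t =
     map (\<lambda>i. (arr I i, sz I i,
               if depart C I \<sigma> i \<le> t then Some (depart C I \<sigma> i) else None))
         (filter (\<lambda>i. arr I i \<le> t) [0..<length I])"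

definition agree_upto :: "bp_instance \<Rightarrow> schedule \<Rightarrow> schedule \<Rightarrow> real \<Rightarrow> bool" where
  "agree_upto I \<sigma> \<tau> t \<longleftrightarrow>
     (\<forall>i<length I. arr I i \<le> t \<longrightarrow>
        fst (\<sigma> i) = fst (\<tau> i) \<and>
        filter (\<lambda>m. fst m \<le> t) (snd (\<sigma> i)) = filter (\<lambda>m. fst m \<le> t) (snd (\<tau> i)))"

type_synonym algorithm = "bp_instance \<Rightarrow> schedule"

definition online_alg :: "real \<Rightarrow> algorithm \<Rightarrow> bool" where
  "online_alg C A \<longleftrightarrow>
     (\<forall>I. valid_instance I \<longrightarrow> valid_schedule C I (A I)) \<and>
     (\<forall>I J t. valid_instance I \<longrightarrow> valid_instance J \<longrightarrow>
        observed C I (A I) t = observed C J (A J) t \<longrightarrow> agree_upto I (A I) (A J) t)"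

definition randomized_online_alg :: "real \<Rightarrow> 'w measure \<Rightarrow> ('w \<Rightarrow> algorithm) \<Rightarrow> bool" where
  "randomized_online_alg C M A \<longleftrightarrow>
     prob_space M \<and>
     (\<forall>\<omega>\<in>space M. online_alg C (A \<omega>)) \<and>
     (\<forall>I. valid_instance I \<longrightarrow> (\<lambda>\<omega>. sched_cost C I (A \<omega> I)) \<in> borel_measurable M)"

definition expected_cost :: "real \<Rightarrow> 'w measure \<Rightarrow> ('w \<Rightarrow> algorithm) \<Rightarrow> bp_instance \<Rightarrow> ennreal" where
  "expected_cost C M A I = (\<integral>\<^sup>+ \<omega>. sched_cost C I (A \<omega> I) \<partial>M)"

end

theory Submission
  imports Defs
begin

definition inst :: "nat \<Rightarrow> real \<Rightarrow> nat set \<Rightarrow> bp_instance" where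
  "inst q mu L = map (\<lambda>i. (0::real, 1 / real q, if i \<in> L then mu else 1)) [0..<q*q]"

lemma inst_len[simp]: "length (inst q mu L) = q*q"
  by (simp add: inst_def)
lemma inst_arr[simp]: "i < q*q \<Longrightarrow> arr (inst q mu L) i = 0"
  by (simp add: inst_def arr_def)
lemma inst_sz[simp]: "i < q*q \<Longrightarrow> sz (inst q mu L) i = 1 / real q"
  by (simp add: inst_def sz_def)
lemma inst_dur[simp]: "i < q*q \<Longrightarrow> dur (inst q mu L) i = (if i \<in> L then mu else 1)"
  by (simp add: inst_def dur_def)

lemma inst_valid: "q \<ge> 1 \<Longrightarrow> mu > 0 \<Longrightarrow> valid_instance (inst q mu L)"
  unfolding valid_instance_def
  by (auto simp: inst_def o_def sorted_iff_nth_mono arr_def sz_def dur_def)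

lemma obs0:
  assumes "C \<ge> 0" "mu > 0"
  shows "observed C (inst q mu L) \<sigma> 0 = map (\<lambda>i. (0, 1/real q, None)) [0..<q*q]"
proof -
  have f: "filter (\<lambda>i. arr (inst q mu L) i \<le> 0) [0..<q*q] = [0..<q*q]"
    by (rule filter_True) simp
  have "\<not> depart C (inst q mu L) \<sigma> i \<le> 0" if "i < q*q" for i
  proof -
    have "0 \<le> C * real (length (snd (\<sigma> i)))" using assms by simp
    moreover have "dur (inst q mu L) i > 0" using that assms by simp
    ultimately show ?thesis using that by (simp add: depart_def)
  qed
  then show ?thesis unfolding observed_def f
    by (intro map_cong) auto
qed

lemma foldl_filter_aux:
  "foldl (\<lambda>b (\<tau>, b'). if \<tau> \<le> t then b' else b) b0 xs =
   foldl (\<lambda>b (\<tau>, b'). if \<tau> \<le> t then b' else b) b0 (filter (\<lambda>m. fst m \<le> t) xs)"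
  by (induct xs arbitrary: b0) auto

lemma bin_at_filter:
  "bin_at \<sigma> i t = foldl (\<lambda>b (\<tau>, b'). if \<tau> \<le> t then b' else b) (fst (\<sigma> i)) (filter (\<lambda>m. fst m \<le> t) (snd (\<sigma> i)))"
  unfolding bin_at_def by (rule foldl_filter_aux)

lemma bin_at_nofilter:
  "filter (\<lambda>m. fst m \<le> t) (snd (\<sigma> i)) = [] \<Longrightarrow> bin_at \<sigma> i t = fst (\<sigma> i)"
  by (simp add: bin_at_filter)

lemma open_set_eq:
  "{b. \<exists>i. present C I \<sigma> i t \<and> bin_at \<sigma> i t = b} = (\<lambda>i. bin_at \<sigma> i t) ` {i. present C I \<sigma> i t}"
  by auto

lemma present_finite: "finite {i. present C I \<sigma> i t}"
  by (rule finite_subset[of _ "{..<length I}"]) (auto simp: present_def)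

lemma capacity:
  assumes "valid_schedule C I \<sigma>"
  shows "(\<Sum>i\<in>{i. present C I \<sigma> i t}. sz I i) \<le> real (open_bins C I \<sigma> t)"
proof -
  let ?P = "{i. present C I \<sigma> i t}"
  let ?g = "\<lambda>i. bin_at \<sigma> i t"
  have fin: "finite (?g ` ?P)" using present_finite by auto
  have "(\<Sum>i\<in>?P. sz I i) = (\<Sum>b\<in>?g ` ?P. \<Sum>i\<in>{x. x \<in> ?P \<and> ?g x = b}. sz I i)"
    by (rule sum.group[symmetric]) (use present_finite fin in auto)
  also have "\<dots> \<le> (\<Sum>b\<in>?g ` ?P. 1)"
  proof (rule sum_mono)
    fix b
    have "{x. x \<in> ?P \<and> ?g x = b} = {i. present C I \<sigma> i t \<and> bin_at \<sigma> i t = b}" by auto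
    then show "(\<Sum>i\<in>{x. x \<in> ?P \<and> ?g x = b}. sz I i) \<le> 1"
      using assms unfolding valid_schedule_def by metis
  qed
  also have "\<dots> = real (open_bins C I \<sigma> t)"
    by (simp add: open_bins_def open_set_eq)
  finally show ?thesis .
qed

definition pairs :: "(nat \<Rightarrow> nat) \<Rightarrow> nat set \<Rightarrow> (nat \<times> nat) set" where
  "pairs b S = {(i,j). i \<in> S \<and> j \<in> S \<and> i \<noteq> j \<and> b i = b j}"

lemma pairs_finite: "finite S \<Longrightarrow> finite (pairs b S)"
  by (rule finite_subset[of _ "S \<times> S"]) (auto simp: pairs_def)

lemma pairs_mono: "S \<subseteq> T \<Longrightarrow> pairs b S \<subseteq> pairs b T"
  by (auto simp: pairs_def)

lemma distinct_count:
  assumes "finite S"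
  shows "real (card S) - real (card (pairs b S)) / 2 \<le> real (card (b ` S))"
  using assms
proof (induction S rule: finite_induct)
  case empty
  then show ?case by (simp add: pairs_def)
next
  case (insert x S)
  have fin: "finite (pairs b (insert x S))" using insert by (simp add: pairs_finite)
  show ?case
  proof (cases "b x \<in> b ` S")
    case True
    then obtain y where y: "y \<in> S" "b y = b x" by auto
    have xy: "x \<noteq> y" using y insert by auto
    have sub: "insert (x,y) (insert (y,x) (pairs b S)) \<subseteq> pairs b (insert x S)"
      using y xy by (auto simp: pairs_def)
    have nin: "(x,y) \<notin> pairs b S" "(y,x) \<notin> pairs b S" using insert by (auto simp: pairs_def)
    have "card (insert (x,y) (insert (y,x) (pairs b S))) = card (pairs b S) + 2"
      using nin xy pairs_finite[OF insert(1)] by simp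
    then have "card (pairs b S) + 2 \<le> card (pairs b (insert x S))"
      using card_mono[OF fin sub] by simp
    moreover have "b ` insert x S = b ` S" using True by auto
    ultimately show ?thesis using insert by simp
  next
    case False
    have "card (pairs b S) \<le> card (pairs b (insert x S))"
      using card_mono[OF fin pairs_mono] by auto
    moreover have "card (b ` insert x S) = card (b ` S) + 1"
      using False insert by simp
    ultimately show ?thesis using insert by simp
  qed
qed

lemma min_bins_le:
  assumes "\<forall>i\<in>S. f i < k" "\<forall>b. (\<Sum>i\<in>{i\<in>S. f i = b}. sz I i) \<le> 1"
  shows "min_bins I S \<le> k"
  unfolding min_bins_def by (rule Least_le) (use assms in blast)


lemma count_with_pair:
  assumes "finite A" "i \<in> A" "j \<in> A" "i \<noteq> j" "k \<ge> 2"
  shows "card {L. L \<subseteq> A \<and> card L = k \<and> i \<in> L \<and> j \<in> L} = (card A - 2) choose (k - 2)"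
proof -
  let ?D = "{L'. L' \<subseteq> A - {i,j} \<and> card L' = k - 2}"
  let ?h = "\<lambda>L'. insert i (insert j L')"
  have eq: "{L. L \<subseteq> A \<and> card L = k \<and> i \<in> L \<and> j \<in> L} = ?h ` ?D"
  proof (intro equalityI subsetI)
    fix L assume L: "L \<in> {L. L \<subseteq> A \<and> card L = k \<and> i \<in> L \<and> j \<in> L}"
    have fL: "finite L" using L assms(1) finite_subset by auto
    have "card (L - {i,j}) = k - 2" using L assms(4) fL by (simp add: card_Diff_subset)
    moreover have "L = ?h (L - {i,j})" using L by auto
    ultimately show "L \<in> ?h ` ?D" using L by blast
  next
    fix L assume "L \<in> ?h ` ?D"
    then obtain L' where L': "L' \<subseteq> A - {i,j}" "card L' = k - 2" "L = ?h L'" by auto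
    have fL': "finite L'" using L' assms(1) finite_subset by auto
    have "i \<notin> L'" "j \<notin> L'" using L' by auto
    then have "card L = k" using L' fL' assms by auto
    then show "L \<in> {L. L \<subseteq> A \<and> card L = k \<and> i \<in> L \<and> j \<in> L}" using L' assms by auto
  qed
  have inj: "inj_on ?h ?D"
  proof (rule inj_onI)
    fix x y assume "x \<in> ?D" "y \<in> ?D" "?h x = ?h y"
    then have "?h x - {i,j} = ?h y - {i,j}" by simp
    moreover have "?h x - {i,j} = x" "?h y - {i,j} = y" using \<open>x \<in> ?D\<close> \<open>y \<in> ?D\<close> by auto
    ultimately show "x = y" by simp
  qed
  have "card ?D = card (A - {i,j}) choose (k - 2)"
    using n_subsets[of "A - {i,j}" "k-2"] assms by simp
  moreover have "card (A - {i,j}) = card A - 2" using assms by (simp add: card_Diff_subset)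
  ultimately show ?thesis unfolding eq using card_image[OF inj] by simp
qed

lemma binom_id:
  assumes "N \<ge> 2" "k \<ge> 2"
  shows "N * (N - 1) * ((N - 2) choose (k - 2)) = (N choose k) * k * (k - 1)"
proof -
  obtain n where n: "N = Suc (Suc n)" using assms(1) by (metis add_2_eq_Suc le_Suc_ex)
  obtain m where m: "k = Suc (Suc m)" using assms(2) by (metis add_2_eq_Suc le_Suc_ex)
  have 1: "Suc (Suc n) * (Suc n choose Suc m) = (Suc (Suc n) choose Suc (Suc m)) * Suc (Suc m)"
    by (rule Suc_times_binomial_eq)
  have 2: "Suc n * (n choose m) = (Suc n choose Suc m) * Suc m"
    by (rule Suc_times_binomial_eq)
  have e: "N - 1 = Suc n" "N - 2 = n" "k - 2 = m" using n m by auto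
  have "N * (N - 1) * ((N - 2) choose (k - 2)) = Suc (Suc n) * (Suc n * (n choose m))"
    unfolding e by (simp only: n mult.assoc)
  also have "\<dots> = Suc (Suc n) * (Suc n choose Suc m) * Suc m" by (simp only: 2 mult.assoc)
  also have "\<dots> = (N choose k) * k * (k - 1)" by (simp only: 1 n m diff_Suc_1)
  finally show ?thesis .
qed

lemma pair_sum:
  fixes b :: "nat \<Rightarrow> nat" and q :: nat
  assumes q: "q \<ge> 1" and G: "G \<subseteq> {..<q*q}" and grp: "\<forall>bb. card {j\<in>G. b j = bb} \<le> q"
  shows "(\<Sum>L\<in>{L. L \<subseteq> {..<q*q} \<and> card L = q}. card (pairs b (L \<inter> G))) \<le> card {L. L \<subseteq> {..<q*q} \<and> card L = q} * q"
proof (cases "q = 1")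
  case True
  have z: "card (pairs b (L \<inter> G)) = 0" if c1: "card L = 1" for L
  proof -
    obtain x where "L = {x}" using card_1_singletonE[OF c1] by blast
    then have "pairs b (L \<inter> G) = {}" by (auto simp: pairs_def)
    then show ?thesis by simp
  qed
  have "(\<Sum>L\<in>{L. L \<subseteq> {..<q*q} \<and> card L = q}. card (pairs b (L \<inter> G))) = 0"
    by (rule sum.neutral) (use z True in auto)
  then show ?thesis by simp
next
  case False
  then have q2: "q \<ge> 2" using q by simp
  define N where "N = q*q"
  define F where "F = {L. L \<subseteq> {..<N} \<and> card L = q}"
  define Q where "Q = pairs b G"
  define c where "c = (N - 2) choose (q - 2)"
  have N2: "N \<ge> 2" using mult_le_mono[of 2 q 1 q] q2 unfolding N_def by simp
  have finG: "finite G" using G finite_subset by blast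
  have finQ: "finite Q" unfolding Q_def using finG by (rule pairs_finite)
  have finF: "finite F" unfolding F_def by (rule finite_subset[of _ "Pow {..<N}"]) auto
  have "(\<Sum>L\<in>F. card (pairs b (L \<inter> G))) = (\<Sum>L\<in>F. \<Sum>p\<in>Q. if fst p \<in> L \<and> snd p \<in> L then 1 else 0)"
  proof (rule sum.cong[OF refl])
    fix L
    have "pairs b (L \<inter> G) = {p\<in>Q. fst p \<in> L \<and> snd p \<in> L}" by (auto simp: pairs_def Q_def)
    then show "card (pairs b (L \<inter> G)) = (\<Sum>p\<in>Q. if fst p \<in> L \<and> snd p \<in> L then 1 else 0)"
      using finQ by (simp add: sum.If_cases Int_def)
  qed
  also have "\<dots> = (\<Sum>p\<in>Q. \<Sum>L\<in>F. if fst p \<in> L \<and> snd p \<in> L then 1 else 0)"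
    by (rule sum.swap)
  also have "\<dots> = (\<Sum>p\<in>Q. c)"
  proof (rule sum.cong[OF refl])
    fix p assume p: "p \<in> Q"
    have "(\<Sum>L\<in>F. if fst p \<in> L \<and> snd p \<in> L then 1 else 0) = card {L\<in>F. fst p \<in> L \<and> snd p \<in> L}"
      using finF by (simp add: sum.If_cases Int_def)
    also have "{L\<in>F. fst p \<in> L \<and> snd p \<in> L} = {L. L \<subseteq> {..<N} \<and> card L = q \<and> fst p \<in> L \<and> snd p \<in> L}"
      unfolding F_def by auto
    also have "card \<dots> = c"
    proof -
      obtain i j where ij: "p = (i,j)" "i \<in> G" "j \<in> G" "i \<noteq> j" using p by (auto simp: Q_def pairs_def)
      have "i \<in> {..<N}" "j \<in> {..<N}" using ij G by (auto simp: N_def)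
      then show ?thesis unfolding c_def using count_with_pair[of "{..<N}" i j q] ij q2 by simp
    qed
    finally show "(\<Sum>L\<in>F. if fst p \<in> L \<and> snd p \<in> L then 1 else 0) = c" .
  qed
  also have "\<dots> = card Q * c" by simp
  finally have S: "(\<Sum>L\<in>F. card (pairs b (L \<inter> G))) = card Q * c" .
  have "Q \<subseteq> Sigma G (\<lambda>i. {j\<in>G. b j = b i})" by (auto simp: Q_def pairs_def)
  then have "card Q \<le> card (Sigma G (\<lambda>i. {j\<in>G. b j = b i}))"
    by (rule card_mono[rotated]) (use finG in auto)
  also have "\<dots> = (\<Sum>i\<in>G. card {j\<in>G. b j = b i})" using finG by (simp add: card_SigmaI)
  also have "\<dots> \<le> (\<Sum>i\<in>G. q)" by (rule sum_mono) (use grp in auto)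
  also have "\<dots> = card G * q" by simp
  also have "\<dots> \<le> N * q" using card_mono[OF _ G] by (simp add: N_def)
  finally have cQ: "card Q \<le> N * q" .
  have "card Q * c * (q - 1) \<le> N * (q * (q - 1)) * c"
    using mult_le_mono1[OF cQ, of "c * (q-1)"] by (simp add: ac_simps)
  also have "\<dots> \<le> N * (N - 1) * c"
  proof -
    have "q * (q - 1) \<le> N - 1" unfolding N_def using q2 by (simp add: diff_mult_distrib2)
    then show ?thesis by (intro mult_le_mono) auto
  qed
  also have "\<dots> = (N choose q) * q * (q - 1)" unfolding c_def by (rule binom_id[OF N2 q2])
  also have "N choose q = card F" unfolding F_def using n_subsets[of "{..<N}" q] by simp
  finally have "card Q * c * (q - 1) \<le> card F * q * (q - 1)" .
  then have "card Q * c \<le> card F * q" using q2 by simp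
  then show ?thesis using S unfolding F_def N_def by simp
qed


lemma OPT_t_cases:
  assumes q: "q \<ge> 1" and mu: "mu \<ge> 1" and L: "L \<subseteq> {..<q*q}" "card L = q"
  shows "(0 \<le> t \<and> t < 1 \<longrightarrow> OPT_t (inst q mu L) t \<le> q) \<and>
         (1 \<le> t \<and> t < mu \<longrightarrow> OPT_t (inst q mu L) t \<le> 1) \<and>
         (\<not> (0 \<le> t \<and> t < mu) \<longrightarrow> OPT_t (inst q mu L) t = 0)"
proof -
  let ?I = "inst q mu L"
  define S where "S = {i. i < length ?I \<and> arr ?I i \<le> t \<and> t < arr ?I i + dur ?I i}"
  have OS: "OPT_t ?I t = min_bins ?I S" by (simp add: OPT_t_def S_def)
  have SN: "S \<subseteq> {..<q*q}" by (auto simp: S_def)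
  have finS: "finite S" using SN finite_subset by blast
  have 1: "min_bins ?I S \<le> q" if t: "0 \<le> t" "t < 1"
  proof (rule min_bins_le[where f = "\<lambda>i. i div q"])
    show "\<forall>i\<in>S. i div q < q" using SN q by (auto simp: less_mult_imp_div_less)
    show "\<forall>bb. (\<Sum>i\<in>{i \<in> S. i div q = bb}. sz ?I i) \<le> 1"
    proof
      fix bb
      have sub: "{i \<in> S. i div q = bb} \<subseteq> {bb*q..<bb*q+q}"
      proof
        fix i assume "i \<in> {i \<in> S. i div q = bb}"
        then have "i div q = bb" by simp
        have a: "i div q * q \<le> i" by (rule div_times_less_eq_dividend)
        have b: "i mod q < q" using q by simp
        have e: "i = i div q * q + i mod q" by simp
        show "i \<in> {bb*q..<bb*q+q}" using a b e \<open>i div q = bb\<close> by auto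
      qed
      have c: "card {i \<in> S. i div q = bb} \<le> q" using card_mono[OF _ sub] by simp
      have "(\<Sum>i\<in>{i \<in> S. i div q = bb}. sz ?I i) = (\<Sum>i\<in>{i \<in> S. i div q = bb}. 1 / real q)"
        by (rule sum.cong) (use SN in auto)
      also have "\<dots> = real (card {i \<in> S. i div q = bb}) / real q" by simp
      also have "\<dots> \<le> 1" using c q by (simp add: divide_le_eq_1)
      finally show "(\<Sum>i\<in>{i \<in> S. i div q = bb}. sz ?I i) \<le> 1" .
    qed
  qed
  have 2: "min_bins ?I S \<le> 1" if t: "1 \<le> t" "t < mu"
  proof (rule min_bins_le[where f = "\<lambda>i. 0"])
    show "\<forall>i\<in>S. (0::nat) < 1" by simp
    have SL: "S \<subseteq> L"
    proof
      fix i assume "i \<in> S"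
      then have "i < q*q" "t < dur ?I i" by (auto simp: S_def)
      then show "i \<in> L" using t by (auto split: if_splits)
    qed
    show "\<forall>bb. (\<Sum>i\<in>{i \<in> S. (0::nat) = bb}. sz ?I i) \<le> 1"
    proof
      fix bb :: nat
      have fL: "finite L" using L(1) finite_subset by blast
      have "(\<Sum>i\<in>{i \<in> S. (0::nat) = bb}. sz ?I i) \<le> (\<Sum>i\<in>L. sz ?I i)"
        by (rule sum_mono2[OF fL]) (use SL L(1) q in auto)
      also have "\<dots> = (\<Sum>i\<in>L. 1 / real q)" by (rule sum.cong) (use L(1) in auto)
      also have "\<dots> = 1" using L q by simp
      finally show "(\<Sum>i\<in>{i \<in> S. (0::nat) = bb}. sz ?I i) \<le> 1" .
    qed
  qed
  have 3: "min_bins ?I S = 0" if t: "\<not> (0 \<le> t \<and> t < mu)"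
  proof -
    have "S = {}"
    proof -
      have "i \<notin> S" for i
      proof
        assume "i \<in> S"
        then have "i < q*q" "0 \<le> t" "t < dur ?I i" by (auto simp: S_def)
        then show False using t mu by (auto split: if_splits)
      qed
      then show ?thesis by blast
    qed
    then have "min_bins ?I S \<le> 0" by (intro min_bins_le[where f = "\<lambda>i. 0"]) auto
    then show ?thesis by simp
  qed
  show ?thesis using 1 2 3 OS by auto
qed

lemma OPT_bound:
  assumes q: "q \<ge> 1" and mu: "mu \<ge> 1" and L: "L \<subseteq> {..<q*q}" "card L = q"
  shows "OPT (inst q mu L) \<le> ennreal (real q + mu)"
proof -
  let ?g = "\<lambda>t. ennreal (real q) * indicator {0..<1} t + indicator {0..<mu} t :: ennreal"
  have pw: "ennreal (real (OPT_t (inst q mu L) t)) \<le> ?g t" for t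
  proof -
    note c = OPT_t_cases[OF q mu L, of t]
    consider "0 \<le> t \<and> t < 1" | "1 \<le> t \<and> t < mu" | "\<not> (0 \<le> t \<and> t < mu)" by linarith
    then show ?thesis
    proof cases
      case 1
      then have "ennreal (real (OPT_t (inst q mu L) t)) \<le> ennreal (real q)" using c by simp
      also have "\<dots> \<le> ?g t" using 1 by (simp add: indicator_def)
      finally show ?thesis .
    next
      case 2
      then have "ennreal (real (OPT_t (inst q mu L) t)) \<le> 1" using c by simp
      also have "\<dots> \<le> ?g t" using 2 by (simp add: indicator_def)
      finally show ?thesis .
    next
      case 3
      then show ?thesis using c by simp
    qed
  qed
  have "OPT (inst q mu L) \<le> (\<integral>\<^sup>+ t. ?g t \<partial>lborel)"
    unfolding OPT_def by (rule nn_integral_mono) (rule pw)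
  also have "\<dots> = ennreal (real q) * ennreal 1 + ennreal mu"
    using mu by (simp add: nn_integral_add nn_integral_cmult_indicator)
  also have "\<dots> = ennreal (real q + mu)" using mu by (simp add: ennreal_plus)
  finally show ?thesis .
qed


lemma cost_lb_int:
  assumes h: "\<And>t. t \<in> {0..<T} \<Longrightarrow> c \<le> real (open_bins C I \<sigma> t)" and c: "c \<ge> 0" and T: "T \<ge> 0"
  shows "ennreal (c * T) \<le> sched_cost C I \<sigma>"
proof -
  have "(\<integral>\<^sup>+ t. ennreal c * indicator {0..<T} t \<partial>lborel) \<le> sched_cost C I \<sigma>"
    unfolding sched_cost_def
  proof (rule nn_integral_mono)
    fix t
    show "ennreal c * indicator {0..<T} t \<le> ennreal (real (open_bins C I \<sigma> t))"
      using h[of t] by (cases "t \<in> {0..<T}") (auto simp: indicator_def)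
  qed
  moreover have "(\<integral>\<^sup>+ t. ennreal c * indicator {0..<T} t \<partial>lborel) = ennreal (c * T)"
    using c T by (simp add: nn_integral_cmult_indicator ennreal_mult)
  ultimately show ?thesis by simp
qed


lemma det_bound:
  assumes C1: "C \<ge> 1" and onl: "online_alg C A"
    and mu_def: "mu = sqrt C" and q_def: "q = nat \<lceil>sqrt C\<rceil>"
    and F_def: "F = {L. L \<subseteq> {..<q*q} \<and> card L = q}"
  shows "ennreal (real (card F) * (mu/30 * (real q + mu))) \<le> (\<Sum>L\<in>F. sched_cost C (inst q mu L) (A (inst q mu L)))"
proof -
  define N where "N = q*q"
  have mu1: "mu \<ge> 1" using C1 by (simp add: mu_def)
  have Cmu: "C = mu * mu" using C1 by (simp add: mu_def)
  have qmu: "mu \<le> real q" "real q \<le> mu + 1" unfolding q_def mu_def using mu1 mu_def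
    by auto
  have q1: "q \<ge> 1" using qmu mu1 by linarith
  define \<sigma> where "\<sigma> L = A (inst q mu L)" for L
  define L0 where "L0 = {..<q}"
  have L0F: "L0 \<in> F" unfolding F_def L0_def N_def using q1
    by (auto simp: le_square order_less_le_trans intro: order_trans[of _ q])
  have valid: "valid_schedule C (inst q mu L) (\<sigma> L)" for L
    using onl inst_valid[OF q1, of mu L] mu1 unfolding online_alg_def \<sigma>_def by simp
  have agree: "agree_upto (inst q mu L) (\<sigma> L) (\<sigma> L0) 0" for L
  proof -
    have "observed C (inst q mu L) (\<sigma> L) 0 = observed C (inst q mu L0) (\<sigma> L0) 0"
      using obs0 C1 mu1 by simp
    then show ?thesis using onl inst_valid[OF q1, of mu] mu1 unfolding online_alg_def \<sigma>_def by simp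
  qed
  define b where "b i = fst (\<sigma> L0 i)" for i
  have fstb: "fst (\<sigma> L i) = b i" if "i < N" for L i
    using agree[of L] that unfolding agree_upto_def b_def N_def by simp
  have filt: "filter (\<lambda>m. fst m \<le> 0) (snd (\<sigma> L i)) = filter (\<lambda>m. fst m \<le> 0) (snd (\<sigma> L0 i))" if "i < N" for L i
    using agree[of L] that unfolding agree_upto_def N_def by simp
  define G where "G = {i. i < N \<and> filter (\<lambda>m. fst m \<le> (0::real)) (snd (\<sigma> L0 i)) = []}"
  have GN: "G \<subseteq> {..<q*q}" by (auto simp: G_def N_def)
  have grp: "\<forall>bb. card {j\<in>G. b j = bb} \<le> q"
  proof
    fix bb
    let ?I = "inst q mu L0"
    let ?T = "{i. present C ?I (\<sigma> L0) i 0 \<and> bin_at (\<sigma> L0) i 0 = bb}"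
    have finT: "finite ?T" by (rule finite_subset[OF _ present_finite]) auto
    have sub: "{j\<in>G. b j = bb} \<subseteq> ?T"
    proof
      fix j assume j: "j \<in> {j\<in>G. b j = bb}"
      then have jN: "j < q*q" and fj: "filter (\<lambda>m. fst m \<le> (0::real)) (snd (\<sigma> L0 j)) = []"
        by (auto simp: G_def N_def)
      have "0 \<le> C * real (length (snd (\<sigma> L0 j)))" using C1 by simp
      then have "present C ?I (\<sigma> L0) j 0" using jN mu1 by (auto simp: present_def depart_def)
      moreover have "bin_at (\<sigma> L0) j 0 = bb" using bin_at_nofilter[of 0 "\<sigma> L0" j, OF fj] j by (simp add: b_def)
      ultimately show "j \<in> ?T" by simp
    qed
    have "(\<Sum>j\<in>{j\<in>G. b j = bb}. sz ?I j) \<le> (\<Sum>j\<in>?T. sz ?I j)"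
      by (rule sum_mono2[OF finT sub]) (auto simp: present_def sz_def inst_def)
    also have "\<dots> \<le> 1" using valid[of L0] unfolding valid_schedule_def by blast
    finally have s1: "(\<Sum>j\<in>{j\<in>G. b j = bb}. sz ?I j) \<le> 1" .
    have "(\<Sum>j\<in>{j\<in>G. b j = bb}. sz ?I j) = (\<Sum>j\<in>{j\<in>G. b j = bb}. 1 / real q)"
      by (rule sum.cong) (use GN in auto)
    then have "real (card {j\<in>G. b j = bb}) / real q \<le> 1" using s1 by simp
    then show "card {j\<in>G. b j = bb} \<le> q" using q1 by (simp add: divide_le_eq_1)
  qed
  define U where "U L = {i\<in>L. snd (\<sigma> L i) = []}" for L
  define a where "a L = card (b ` U L)" for L
  define m where "m L = card (L - U L)" for L
  have LN: "L \<subseteq> {..<N}" "finite L" "card L = q" if "L \<in> F" for L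
    using that finite_subset unfolding F_def N_def by auto
  have claim1: "ennreal (real (a L) * mu) \<le> sched_cost C (inst q mu L) (\<sigma> L)" if L: "L \<in> F" for L
  proof (rule cost_lb_int)
    show "0 \<le> real (a L)" "0 \<le> mu" using mu1 by auto
    fix t :: real assume t: "t \<in> {0..<mu}"
    have "b ` U L \<subseteq> {bb. \<exists>i. present C (inst q mu L) (\<sigma> L) i t \<and> bin_at (\<sigma> L) i t = bb}"
    proof
      fix x assume "x \<in> b ` U L"
      then obtain i where i: "i \<in> L" "snd (\<sigma> L i) = []" "x = b i" by (auto simp: U_def)
      have iN: "i < q*q" using i LN[OF L] by (auto simp: N_def)
      have "present C (inst q mu L) (\<sigma> L) i t" using iN i t by (auto simp: present_def depart_def)
      moreover have "bin_at (\<sigma> L) i t = x" using i fstb[of i L] iN by (simp add: bin_at_def N_def)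
      ultimately show "x \<in> {bb. \<exists>i. present C (inst q mu L) (\<sigma> L) i t \<and> bin_at (\<sigma> L) i t = bb}" by blast
    qed
    then have "a L \<le> open_bins C (inst q mu L) (\<sigma> L) t"
      unfolding a_def open_bins_def by (rule card_mono[rotated]) (simp add: open_set_eq present_finite)
    then show "real (a L) \<le> real (open_bins C (inst q mu L) (\<sigma> L) t)" by simp
  qed
  have claim2: "ennreal (real (m L) / real q * (1 + C)) \<le> sched_cost C (inst q mu L) (\<sigma> L)" if L: "L \<in> F" for L
  proof (rule cost_lb_int)
    show "0 \<le> real (m L) / real q" "0 \<le> 1 + C" using C1 by auto
    fix t :: real assume t: "t \<in> {0..<1+C}"
    let ?P = "{i. present C (inst q mu L) (\<sigma> L) i t}"
    have sub: "L - U L \<subseteq> ?P"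
    proof
      fix i assume i: "i \<in> L - U L"
      have iN: "i < q*q" using i LN[OF L] by (auto simp: N_def)
      have "snd (\<sigma> L i) \<noteq> []" using i by (auto simp: U_def)
      then have "1 \<le> real (length (snd (\<sigma> L i)))" by (cases "snd (\<sigma> L i)") auto
      then have "C \<le> C * real (length (snd (\<sigma> L i)))" using C1 by simp
      moreover have "1 \<le> dur (inst q mu L) i" using iN mu1 by simp
      ultimately show "i \<in> ?P" using iN t by (auto simp: present_def depart_def)
    qed
    have "real (m L) / real q = (\<Sum>i\<in>L - U L. sz (inst q mu L) i)"
    proof -
      have "(\<Sum>i\<in>L - U L. sz (inst q mu L) i) = (\<Sum>i\<in>L - U L. 1 / real q)"
        by (rule sum.cong) (use LN[OF L] in \<open>auto simp: N_def\<close>)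
      then show ?thesis by (simp add: m_def)
    qed
    also have "\<dots> \<le> (\<Sum>i\<in>?P. sz (inst q mu L) i)"
      by (rule sum_mono2[OF present_finite sub]) (auto simp: present_def sz_def inst_def)
    also have "\<dots> \<le> real (open_bins C (inst q mu L) (\<sigma> L) t)" by (rule capacity[OF valid])
    finally show "real (m L) / real q \<le> real (open_bins C (inst q mu L) (\<sigma> L) t)" .
  qed
  have claim3: "real q - real (card (pairs b (L \<inter> G))) / 2 \<le> real (a L) + real (m L)" if L: "L \<in> F" for L
  proof -
    have UL: "U L \<subseteq> L" by (auto simp: U_def)
    have UG: "U L \<subseteq> L \<inter> G"
    proof
      fix i assume i: "i \<in> U L"
      then have iN: "i < N" using LN[OF L] by (auto simp: U_def)
      then show "i \<in> L \<inter> G" using i filt[OF iN, of L] by (auto simp: U_def G_def)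
    qed
    have finU: "finite (U L)" using UL LN[OF L] finite_subset by blast
    have finLG: "finite (L \<inter> G)" using LN[OF L] by simp
    have "card (pairs b (U L)) \<le> card (pairs b (L \<inter> G))"
      by (rule card_mono[OF pairs_finite[OF finLG] pairs_mono[OF UG]])
    moreover have "real (card (U L)) - real (card (pairs b (U L))) / 2 \<le> real (a L)"
      unfolding a_def by (rule distinct_count[OF finU])
    moreover have "m L = card L - card (U L)" unfolding m_def
      by (rule card_Diff_subset[OF finU UL])
    moreover have "card (U L) \<le> card L" by (rule card_mono[OF _ UL]) (use LN[OF L] in simp)
    ultimately show ?thesis using LN[OF L] by simp
  qed
  have claim: "ennreal (mu / 4 * (real (a L) + real (m L))) \<le> sched_cost C (inst q mu L) (\<sigma> L)" if L: "L \<in> F" for L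
  proof -
    have k: "mu / 2 * real q \<le> 1 + C"
    proof -
      have "mu / 2 * real q \<le> mu / 2 * (mu + 1)" using qmu mu1 by (intro mult_left_mono) auto
      also have "\<dots> \<le> 1 + C"
      proof -
        have h: "mu \<le> mu * mu" using mult_left_mono[of 1 mu mu] mu1 by simp
        show ?thesis unfolding Cmu using h by (simp add: field_simps)
      qed
      finally show ?thesis .
    qed
    have k2: "mu / 2 * real (m L) \<le> real (m L) / real q * (1 + C)"
    proof -
      have "mu / 2 * real (m L) = (mu / 2 * real q) * (real (m L) / real q)" using q1 by simp
      also have "\<dots> \<le> (1 + C) * (real (m L) / real q)" using k by (intro mult_right_mono) auto
      finally show ?thesis by (simp add: mult.commute)
    qed
    have "mu / 4 * (real (a L) + real (m L)) \<le> real (a L) * mu \<or>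
          mu / 4 * (real (a L) + real (m L)) \<le> real (m L) / real q * (1 + C)"
    proof (cases "real (a L) \<le> real (m L)")
      case True
      have "mu / 4 * (real (a L) + real (m L)) \<le> mu / 4 * (real (m L) + real (m L))"
        using True mu1 by (intro mult_left_mono) auto
      also have "\<dots> = mu / 2 * real (m L)" by simp
      finally have "mu / 4 * (real (a L) + real (m L)) \<le> mu / 2 * real (m L)" .
      then show ?thesis using k2 by (intro disjI2) (rule order_trans)
    next
      case False
      have "mu / 4 * (real (a L) + real (m L)) \<le> mu / 4 * (real (a L) + real (a L))"
        using False mu1 by (intro mult_left_mono) auto
      also have "\<dots> = mu / 2 * real (a L)" by simp
      also have "\<dots> \<le> real (a L) * mu" using mu1 by simp
      finally show ?thesis by (rule disjI1)
    qed
    then show ?thesis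
      using claim1[OF L] claim2[OF L] by (meson ennreal_leI order_trans)
  qed
  have fF: "finite F" unfolding F_def by (rule finite_subset[of _ "Pow {..<q*q}"]) auto
  have ps: "(\<Sum>L\<in>F. card (pairs b (L \<inter> G))) \<le> card F * q"
    using pair_sum[OF q1 GN grp] unfolding F_def by simp
  have "real (card F) * real q / 2 \<le> (\<Sum>L\<in>F. real q - real (card (pairs b (L \<inter> G))) / 2)"
  proof -
    have "(\<Sum>L\<in>F. real q - real (card (pairs b (L \<inter> G))) / 2) =
          real (card F) * real q - real (\<Sum>L\<in>F. card (pairs b (L \<inter> G))) / 2"
      by (simp add: sum_subtractf sum_divide_distrib)
    moreover have "real (\<Sum>L\<in>F. card (pairs b (L \<inter> G))) \<le> real (card F) * real q"
      using ps by (metis of_nat_le_iff of_nat_mult)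
    ultimately show ?thesis by (simp add: mult.commute)
  qed
  also have "\<dots> \<le> (\<Sum>L\<in>F. real (a L) + real (m L))"
    by (rule sum_mono) (rule claim3)
  finally have sumam: "real (card F) * real q / 2 \<le> (\<Sum>L\<in>F. real (a L) + real (m L))" .
  have "real (card F) * (mu/30 * (real q + mu)) \<le> mu / 4 * (real (card F) * real q / 2)"
  proof -
    have "mu/30 * (real q + mu) \<le> mu/30 * (2 * real q)" using qmu mu1 by (intro mult_left_mono) auto
    also have "\<dots> \<le> mu / 8 * real q"
    proof -
      have "0 \<le> mu * real q" using mu1 by simp
      then show ?thesis by simp
    qed
    finally have h: "mu/30 * (real q + mu) \<le> mu / 8 * real q" .
    have "real (card F) * (mu/30 * (real q + mu)) \<le> real (card F) * (mu / 8 * real q)"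
      using h by (intro mult_left_mono) auto
    also have "\<dots> = mu / 4 * (real (card F) * real q / 2)" by simp
    finally show ?thesis .
  qed
  also have "\<dots> \<le> mu / 4 * (\<Sum>L\<in>F. real (a L) + real (m L))"
    using sumam mu1 by (intro mult_left_mono) auto
  also have "\<dots> = (\<Sum>L\<in>F. mu / 4 * (real (a L) + real (m L)))" by (simp add: sum_distrib_left)
  finally have "ennreal (real (card F) * (mu/30 * (real q + mu))) \<le> ennreal (\<Sum>L\<in>F. mu / 4 * (real (a L) + real (m L)))"
    by (rule ennreal_leI)
  also have "\<dots> = (\<Sum>L\<in>F. ennreal (mu / 4 * (real (a L) + real (m L))))"
    using mu1 by (subst sum_ennreal) auto
  also have "\<dots> \<le> (\<Sum>L\<in>F. sched_cost C (inst q mu L) (\<sigma> L))"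
    by (rule sum_mono) (rule claim)
  finally show ?thesis unfolding \<sigma>_def .
qed


theorem lemma19:
  fixes C :: real and M :: "'w measure" and A :: "'w \<Rightarrow> algorithm"
  assumes "C \<ge> 1"
    and "randomized_online_alg C M A"
  shows "\<exists>I. valid_instance I \<and> I \<noteq> [] \<and>
             (\<forall>i<length I. 1 \<le> dur I i \<and> dur I i \<le> sqrt C) \<and>
             expected_cost C M A I \<ge> ennreal (sqrt C / 30) * OPT I"
proof -
  define mu where "mu = sqrt C"
  define q where "q = nat \<lceil>sqrt C\<rceil>"
  define F where "F = {L. L \<subseteq> {..<q*q} \<and> card L = q}"
  have C1: "C \<ge> 1" by (rule assms(1))
  have mu1: "mu \<ge> 1" using C1 by (simp add: mu_def)
  have qmu: "mu \<le> real q" unfolding q_def mu_def using mu1 mu_def by auto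
  have q1: "q \<ge> 1" using qmu mu1 by linarith
  have ps: "prob_space M" and onl: "\<And>\<omega>. \<omega> \<in> space M \<Longrightarrow> online_alg C (A \<omega>)"
    and meas: "\<And>I. valid_instance I \<Longrightarrow> (\<lambda>\<omega>. sched_cost C I (A \<omega> I)) \<in> borel_measurable M"
    using assms(2) unfolding randomized_online_alg_def by auto
  have fF: "finite F" unfolding F_def by (rule finite_subset[of _ "Pow {..<q*q}"]) auto
  have L0F: "{..<q} \<in> F" unfolding F_def using q1
    by (auto simp: le_square order_less_le_trans intro: order_trans[of _ q])
  have Fne: "F \<noteq> {}" using L0F by auto
  define x where "x = mu/30 * (real q + mu)"
  have x0: "x \<ge> 0" using mu1 by (simp add: x_def)
  have "ennreal (real (card F) * x) = (\<integral>\<^sup>+ \<omega>. ennreal (real (card F) * x) \<partial>M)"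
    using prob_space.emeasure_space_1[OF ps] by simp
  also have "\<dots> \<le> (\<integral>\<^sup>+ \<omega>. (\<Sum>L\<in>F. sched_cost C (inst q mu L) (A \<omega> (inst q mu L))) \<partial>M)"
    by (rule nn_integral_mono) (unfold x_def, rule det_bound[OF C1 onl mu_def q_def F_def])
  also have "\<dots> = (\<Sum>L\<in>F. expected_cost C M A (inst q mu L))"
    unfolding expected_cost_def
    by (rule nn_integral_sum) (rule meas, rule inst_valid[OF q1], use mu1 in simp)
  finally have big: "ennreal (real (card F) * x) \<le> (\<Sum>L\<in>F. expected_cost C M A (inst q mu L))" .
  have "\<exists>L\<in>F. ennreal x \<le> expected_cost C M A (inst q mu L)"
  proof (rule ccontr)
    assume "\<not> ?thesis"
    then have lt: "\<forall>L\<in>F. expected_cost C M A (inst q mu L) < ennreal x" by auto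
    have "(\<Sum>L\<in>F. expected_cost C M A (inst q mu L)) < ennreal (real (card F) * x)"
    proof -
      have "\<forall>L\<in>F. \<exists>r. 0 \<le> r \<and> r < x \<and> expected_cost C M A (inst q mu L) = ennreal r"
      proof
        fix L assume L: "L \<in> F"
        have "expected_cost C M A (inst q mu L) < ennreal x" using lt L by auto
        then show "\<exists>r. 0 \<le> r \<and> r < x \<and> expected_cost C M A (inst q mu L) = ennreal r"
          by (metis ennreal_cases ennreal_less_iff ennreal_less_top less_le_not_le top.extremum_strict)
      qed
      then obtain r where r: "\<And>L. L \<in> F \<Longrightarrow> 0 \<le> r L \<and> r L < x \<and> expected_cost C M A (inst q mu L) = ennreal (r L)"
        by metis
      have "(\<Sum>L\<in>F. expected_cost C M A (inst q mu L)) = (\<Sum>L\<in>F. ennreal (r L))"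
        by (rule sum.cong) (use r in auto)
      also have "\<dots> = ennreal (\<Sum>L\<in>F. r L)" using r by (subst sum_ennreal) auto
      also have "\<dots> < ennreal (\<Sum>L\<in>F. x)"
      proof -
        have "(\<Sum>L\<in>F. r L) < (\<Sum>L\<in>F. x)" by (rule sum_strict_mono[OF fF Fne]) (use r in auto)
        then show ?thesis using x0 r by (subst ennreal_less_iff) (auto intro: sum_nonneg)
      qed
      also have "\<dots> = ennreal (real (card F) * x)" by simp
      finally show ?thesis .
    qed
    then show False using big by simp
  qed
  then obtain L where L: "L \<in> F" and Lx: "ennreal x \<le> expected_cost C M A (inst q mu L)" by blast
  have LF: "L \<subseteq> {..<q*q}" "card L = q" using L by (auto simp: F_def)
  have "ennreal (sqrt C / 30) * OPT (inst q mu L) \<le> ennreal (mu / 30) * ennreal (real q + mu)"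
    unfolding mu_def by (rule mult_left_mono) (use OPT_bound[OF q1 mu1 LF] mu_def in auto)
  also have "\<dots> = ennreal x" unfolding x_def using mu1 by (simp add: ennreal_mult[symmetric] del: ennreal_plus)
  finally have main: "ennreal (sqrt C / 30) * OPT (inst q mu L) \<le> expected_cost C M A (inst q mu L)"
    using Lx by simp
  show ?thesis
  proof (intro exI conjI)
    show "valid_instance (inst q mu L)" using inst_valid[OF q1] mu1 by simp
    show "inst q mu L \<noteq> []" using q1 by (metis inst_len length_0_conv mult_is_0 not_one_le_zero)
    show "\<forall>i<length (inst q mu L). 1 \<le> dur (inst q mu L) i \<and> dur (inst q mu L) i \<le> sqrt C"
      using mu1 by (auto simp: mu_def)
    show "ennreal (sqrt C / 30) * OPT (inst q mu L) \<le> expected_cost C M A (inst q mu L)" by (rule main)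
  qed
qed

end
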